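(* Let $t\ge 1$ and $c\in\mathbb{Z}$. Then \[ \begin{bmatrix}K;c+2\\ t\end{bmatrix}=(q^t+q^{-t})\begin{bmatrix}K;c+1\\ t\end{bmatrix}-\begin{bmatrix}K;c\\ t\end{bmatrix}+\begin{bmatrix}K;c\\ t-2\end{bmatrix}. \]
   Context: Let $q$ be an indeterminate and work in the Laurent polynomial ring $\mathbb{Q}(q)[K,K^{-1}]$ (the Cartan part of $\mathcal{U}_q(\mathfrak{sl}_2)$). Let $\{n\}_q=\frac{q^n-q^{-n}}{q-q^{-1}}$, $\{n\}_q!=\{n\}_q\cdots\{1\}_q$, $[K;a]=\frac{q^aK-q^{-a}K^{-1}}{q-q^{-1}}$ for $a\in\mathbb{Z}$, and for $c\in\mathbb{Z}$, $t\in\mathbb{N}_0$, $\begin{bmatrix}K;c\\ t\end{bmatrix}=\frac{[K;c][K;c-1]\cdots[K;c-t+1]}{\{t\}_q!}$, with $\begin{bmatrix}K;c\\ 0\end{bmatrix}=1$ and $\begin{bmatrix}K;c\\ t\end{bmatrix}=0$ for $t<0$. *)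

theory Defs
  imports "HOL-Computational_Algebra.Formal_Laurent_Series" "HOL-Computational_Algebra.Fraction_Field"
begin

definition qint :: "'a::field \<Rightarrow> int \<Rightarrow> 'a" where
  "qint q n = (q powi n - q powi (-n)) / (q - inverse q)"

definition qfact :: "'a::field \<Rightarrow> nat \<Rightarrow> 'a" where
  "qfact q t = (\<Prod>i\<in>{1..t}. qint q (int i))"

definition Kbr :: "'a::field \<Rightarrow> 'a \<Rightarrow> int \<Rightarrow> 'a" where
  "Kbr q K a = (q powi a * K - q powi (-a) * inverse K) / (q - inverse q)"

definition Kbinom :: "'a::field \<Rightarrow> 'a \<Rightarrow> int \<Rightarrow> int \<Rightarrow> 'a" where
  "Kbinom q K c t =
     (if t < 0 then 0
      else (\<Prod>j\<in>{0..<nat t}. Kbr q K (c - int j)) / qfact q (nat t))"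

text \<open>The concrete setting: Q(q) = rat poly fract; Q(q)[K,K^-1] embedded in the
  Laurent series field over Q(q), with K = fls_X and q a constant.\<close>

definition qQ :: "rat poly fract" where
  "qQ = Fract [:0, 1:] 1"

definition qL :: "rat poly fract fls" where
  "qL = fls_const qQ"

definition KL :: "rat poly fract fls" where
  "KL = fls_X"

end

theory Submission
  imports Defs
begin

lemma ab1: "(a2::'a::field) = w*a1 - a0 \<Longrightarrow> a2/d = w*(a1/d) - a0/d"
  by (simp add: diff_divide_distrib)
lemma ab2: "(a2::'a::field)*a1 = w*a1*an - an*an1 + b1*b2 \<Longrightarrow> d \<noteq> 0 \<Longrightarrow>
   (a2/d)*(a1/d) = w*(a1/d)*(an/d) - (an/d)*(an1/d) + (b1/d)*(b2/d)"
  by (simp add: field_simps)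

lemma ab3: "(F::'a::field) \<noteq> 0 \<Longrightarrow> a \<noteq> 0 \<Longrightarrow> b \<noteq> 0 \<Longrightarrow> X2*X1 = w*X1*Xn - Xn*Xn1 + a*b \<Longrightarrow>
   X2*X1*A/(F*a*b) = w*(X1*A*Xn/(F*a*b)) - A*Xn*Xn1/(F*a*b) + A/F"
proof -
  assume h: "F \<noteq> 0" "a \<noteq> 0" "b \<noteq> 0" "X2*X1 = w*X1*Xn - Xn*Xn1 + a*b"
  have "X2*X1*A = (w*X1*Xn - Xn*Xn1 + a*b)*A" using h by simp
  thus ?thesis using h by (simp add: field_simps)
qed

lemma core1:
  fixes q K :: "'a::field"
  assumes q0: "q \<noteq> 0" and K0: "K \<noteq> 0" and d0: "q - inverse q \<noteq> 0"
  shows "Kbr q K (c+2) = (q + inverse q) * Kbr q K (c+1) - Kbr q K c"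
proof -
  have d: "q*q - 1 \<noteq> 0" using q0 d0 by (auto simp: field_simps)
  define u where "u = q powi c"
  have u0: "u \<noteq> 0" using q0 by (simp add: u_def)
  have e: "q powi (c+2) = q^2*u" "q powi (-(c+2)) = inverse (q^2*u)"
     "q powi (c+1) = q*u" "q powi (-(c+1)) = inverse (q*u)" "q powi (-c) = inverse u" "q powi c = u"
    using q0 by (auto simp add: u_def power_int_add power_int_diff power_int_minus field_simps)
  have X: "q^2*u * K - inverse (q^2*u) * inverse K = (q + inverse q) * (q*u * K - inverse (q*u) * inverse K) - (u * K - inverse u * inverse K)"
    using q0 K0 u0 by (simp add: field_simps) algebra
  show ?thesis unfolding Kbr_def e by (rule ab1[OF X])
qed

lemma core2:
  fixes q K :: "'a::field"
  assumes q0: "q \<noteq> 0" and K0: "K \<noteq> 0" and d0: "q - inverse q \<noteq> 0"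
  shows "Kbr q K (c+2) * Kbr q K (c+1) = (q powi (int n+2) + q powi (-(int n+2))) * Kbr q K (c+1) * Kbr q K (c - int n)
     - Kbr q K (c - int n) * Kbr q K (c - int n - 1) + qint q (int n + 1) * qint q (int n + 2)"
proof -
  have d: "q*q - 1 \<noteq> 0" using q0 d0 by (auto simp: field_simps)
  define u where "u = q powi c"
  define v where "v = q powi (int n)"
  have u0: "u \<noteq> 0" "v \<noteq> 0" using q0 by (simp_all add: u_def v_def)
  have e: "q powi (c+2) = q^2*u" "q powi (-(c+2)) = inverse (q^2*u)"
     "q powi (c+1) = q*u" "q powi (-(c+1)) = inverse (q*u)"
     "q powi (c - int n) = u/v" "q powi (-(c - int n)) = inverse (u/v)"
     "q powi (c - int n - 1) = u/(v*q)" "q powi (-(c - int n - 1)) = inverse (u/(v*q))"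
     "q powi (int n + 2) = q^2*v" "q powi (-(int n + 2)) = inverse (q^2*v)"
     "q powi (int n + 1) = q*v" "q powi (-(int n + 1)) = inverse (q*v)"
    using q0 by (auto simp add: u_def v_def power_int_add power_int_diff power_int_minus field_simps)
  have X: "(q^2*u * K - inverse (q^2*u) * inverse K) * (q*u * K - inverse (q*u) * inverse K)
     = (q^2*v + inverse (q^2*v)) * (q*u * K - inverse (q*u) * inverse K) * (u/v * K - inverse (u/v) * inverse K)
     - (u/v * K - inverse (u/v) * inverse K) * (u/(v*q) * K - inverse (u/(v*q)) * inverse K)
     + (q*v - inverse (q*v)) * (q^2*v - inverse (q^2*v))"
    using q0 K0 u0 by (simp add: field_simps) algebra
  show ?thesis unfolding Kbr_def qint_def e by (rule ab2[OF X d0])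
qed

lemma gen:
  fixes q K :: "'a::field"
  assumes q0: "q \<noteq> 0" and K0: "K \<noteq> 0" and nz: "\<And>i::nat. i \<ge> 1 \<Longrightarrow> qint q (int i) \<noteq> 0"
    and t: "t \<ge> 1"
  shows "Kbinom q K (c + 2) t
     = (q powi t + q powi (-t)) * Kbinom q K (c + 1) t
       - Kbinom q K c t + Kbinom q K c (t - 2)"
proof -
  have d0: "q - inverse q \<noteq> 0" using nz[of 1] by (auto simp: qint_def)
  have F0: "qfact q m \<noteq> 0" for m unfolding qfact_def using nz by (auto simp: prod_zero_iff)
  show ?thesis
  proof (cases "t = 1")
    case True
    have q1: "qint q 1 = 1" using d0 by (simp add: qint_def)
    show ?thesis using True core1[OF q0 K0 d0, of c]
      by (simp add: Kbinom_def qfact_def q1 power_int_minus)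
  next
    case False
    then obtain n where n: "t = int n + 2" using t by (metis add.commute le_Suc_ex zle_iff_zadd one_add_one add_diff_cancel_left' less_le int_ops(2) nat_int zless_iff_Suc_zadd zless_imp_add1_zle)
    have nt: "nat t = Suc (Suc n)" using n by simp
    define P where "P c' m = (\<Prod>j\<in>{0..<m}. Kbr q K (c' - int j))" for c' m
    have P2: "P (c+2) (Suc (Suc n)) = Kbr q K (c+2) * Kbr q K (c+1) * P c n"
      unfolding P_def
      by (simp only: prod.atLeast0_lessThan_Suc_shift)
         (simp add: algebra_simps)
    have P1: "P (c+1) (Suc (Suc n)) = Kbr q K (c+1) * P c n * Kbr q K (c - int n)"
    proof -
      have "P (c+1) (Suc (Suc n)) = Kbr q K (c+1) * (\<Prod>j\<in>{0..<Suc n}. Kbr q K (c + 1 - int (Suc j)))"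
        unfolding P_def by (subst prod.atLeast0_lessThan_Suc_shift) simp
      also have "\<dots> = Kbr q K (c+1) * ((\<Prod>j\<in>{0..<n}. Kbr q K (c + 1 - int (Suc j))) * Kbr q K (c - int n))"
        by (subst prod.atLeast0_lessThan_Suc) simp
      also have "(\<Prod>j\<in>{0..<n}. Kbr q K (c + 1 - int (Suc j))) = P c n"
        unfolding P_def by (rule prod.cong) simp_all
      finally show ?thesis by (simp add: algebra_simps)
    qed
    have P0: "P c (Suc (Suc n)) = P c n * Kbr q K (c - int n) * Kbr q K (c - int n - 1)"
      unfolding P_def by (simp add: prod.atLeast0_lessThan_Suc algebra_simps)
    have Fq: "qfact q (Suc (Suc n)) = qfact q n * qint q (int n + 1) * qint q (int n + 2)"
      unfolding qfact_def by (simp add: prod.cl_ivl_Suc algebra_simps)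
    have a: "qint q (int n + 1) \<noteq> 0" using nz[of "Suc n"] by (simp add: add.commute)
    have b: "qint q (int n + 2) \<noteq> 0" using nz[of "Suc (Suc n)"] by (simp add: add.commute)
    have KB: "Kbinom q K c' t = P c' (Suc (Suc n)) / qfact q (Suc (Suc n))" for c'
      using n nt by (simp add: Kbinom_def P_def)
    have KB2: "Kbinom q K c (t-2) = P c n / qfact q n"
      using n by (simp add: Kbinom_def P_def)
    have C: "Kbr q K (c+2) * Kbr q K (c+1) = (q powi t + q powi (-t)) * Kbr q K (c+1) * Kbr q K (c - int n)
     - Kbr q K (c - int n) * Kbr q K (c - int n - 1) + qint q (int n + 1) * qint q (int n + 2)"
      using core2[OF q0 K0 d0, of c n] n by simp
    show ?thesis unfolding KB KB2 P2 P1 P0 Fq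
      by (rule ab3[OF F0 a b C])
  qed
qed

lemma qQ_pow: "qQ ^ m \<noteq> 1" if "m \<ge> 1"
proof
  assume "qQ ^ m = 1"
  moreover have "qQ ^ m = Fract ([:0,1:]^m) 1"
    unfolding qQ_def by (induction m) (auto simp: One_fract_def)
  ultimately have "([:0,1:] :: rat poly)^m = 1" by (simp add: One_fract_def eq_fract)
  hence "degree (([:0,1:] :: rat poly)^m) = 0" by simp
  thus False using that by (simp add: degree_power_eq)
qed

lemma qL_pow: "qL ^ m \<noteq> 1" if "m \<ge> 1"
proof -
  have "qL ^ m = fls_const (qQ ^ m)" unfolding qL_def by (simp add: fls_const_power)
  moreover have "fls_const (qQ ^ m) \<noteq> fls_const 1"
  proof
    assume "fls_const (qQ ^ m) = fls_const 1"
    hence "fls_nth (fls_const (qQ ^ m)) 0 = fls_nth (fls_const 1) 0" by simp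
    thus False using qQ_pow[OF that] by simp
  qed
  ultimately show ?thesis by simp
qed

lemma qL0: "qL \<noteq> 0"
proof
  assume "qL = 0"
  hence "fls_nth qL 0 = 0" by simp
  hence "qQ = 0" unfolding qL_def by simp
  thus False unfolding qQ_def by (simp add: Zero_fract_def eq_fract)
qed

lemma qL_qint: "qint qL (int i) \<noteq> 0" if "i \<ge> 1"
proof -
  have n1: "qL - inverse qL \<noteq> 0"
  proof
    assume "qL - inverse qL = 0"
    hence "qL * qL = 1" using qL0 by (simp add: field_simps)
    thus False using qL_pow[of 2] by (simp add: power2_eq_square)
  qed
  have n2: "qL ^ i - inverse (qL ^ i) \<noteq> 0"
  proof
    assume "qL ^ i - inverse (qL ^ i) = 0"
    hence "qL ^ i * qL ^ i = 1" using qL0 by (simp add: field_simps)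
    hence "qL ^ (2*i) = 1" by (simp add: power_add mult_2)
    thus False using qL_pow[of "2*i"] that by simp
  qed
  show ?thesis unfolding qint_def using n1 n2 by (simp add: power_int_minus)
qed

theorem proposition6p1:
  fixes t c :: int
  assumes "t \<ge> 1"
  shows "Kbinom qL KL (c + 2) t
     = (qL powi t + qL powi (-t)) * Kbinom qL KL (c + 1) t
       - Kbinom qL KL c t + Kbinom qL KL c (t - 2)"
  by (rule gen[OF qL0 _ qL_qint assms]) (simp add: KL_def)

end
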